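(* Let $\mu$ be a reservoir distribution, $\beta\in[0,1]$, $\mathrm{Cost}\in\mathbb{R}$, $B$ an increasing sequence of positive integers, and $\mathcal{A}$ a $B$-batch-compressed $N$-sample algorithm. Suppose $\mathbb{A}$ is an adaptive randomness distorting adversary with $\mathrm{strength}(\mathbb{A})\le\mathrm{Cost}$ whose declarations ensure that, whenever all declarations hold, the output of $\mathcal{A}$ satisfies $p_{i^*}\le\beta$ almost surely. Then \[ \mathbb{P}^{\mu,\mathcal{A}}[p_{i^*}\le\beta]\ \ge\ e^{-\mathrm{Cost}}, \] where the left side is the true (undistorted) probability when $\mathcal{A}$ runs on reservoir $\mu$.
   Context: Infinite-armed Bernoulli bandit: arms $a_1,a_2,\dots$ with means $p_i$ drawn i.i.d. from a reservoir distribution $\mu$ (a probability measure on $[0,1]$), each sample of $a_i$ returning an independent Bernoulli$(p_i)$ reward. An algorithm is $B$-batch-compressed (for increasing positive integers $B=(b_1,b_2,\dots)$) if it acts only by raising the number of samples $n_i$ of some arm from $b_k$ to $b_{k+1}$ (or from $0$ to $b_1$), collecting that batch of new samples; it finally outputs an arm $a_{i^*}$. Bayesian viewpoint: $\mu$ is known to both algorithm and adversary, and at time $t$ the posterior of $(p_1,p_2,\dots)$ given the observed rewards is the product of posteriors $\mu_{i,t}$ (where $\mu_{i,t}(dx)\propto x^{R}(1-x)^{n-R}\mu(dx)$ if arm $i$ has $n$ samples with total reward $R$); this posterior $\boldsymbol{\mu}^t$ determines the conditional law of the next batch's outcomes and of $p_{i^*}$. An adaptive randomness distorting adversary $\mathbb{A}$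 may, each time $\mathcal{A}$ requests a batch, declare (based on the history) an event restricting the possible outcomes of that batch, and, when $\mathcal{A}$ outputs $a_{i^*}$, declare an event restricting the possible value of $p_{i^*}$; the process then continues conditioned on the declared events holding. If a declaration made at time $s$ has probability $P_s$ under the current posterior $\boldsymbol{\mu}^s$, its cost is $\log(1/P_s)$; the total cost is $\mathrm{Cost}_N=\sum_s\log(1/P_s)$, and $\mathrm{strength}(\mathbb{A})\le\mathrm{Cost}$ means $\mathrm{Cost}_N\le\mathrm{Cost}$ almost surely. *)

theory Defs
  imports "HOL-Probability.Probability"
begin

text \<open>Bayesian model of a B-batch-compressed algorithm on the infinite-armed
Bernoulli bandit with reservoir distribution mu. A history is the list of batches
requested so far: (arm index, list of the Bernoulli outcomes of that batch).\<close>

datatype act = Sample nat | Output nat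

type_synonym hist = "(nat \<times> bool list) list"

definition reservoir :: "real measure \<Rightarrow> bool" where
  "reservoir \<mu> \<longleftrightarrow> prob_space \<mu> \<and> sets \<mu> = sets borel \<and> measure \<mu> {0..1} = 1"

definition batch_seq :: "(nat \<Rightarrow> nat) \<Rightarrow> bool" where
  "batch_seq B \<longleftrightarrow> strict_mono B \<and> 0 < B 0"

definition arm_n :: "hist \<Rightarrow> nat \<Rightarrow> nat" where
  "arm_n h i = (\<Sum>(j,\<omega>)\<leftarrow>h. if j = i then length \<omega> else 0)"

definition arm_R :: "hist \<Rightarrow> nat \<Rightarrow> nat" where
  "arm_R h i = (\<Sum>(j,\<omega>)\<leftarrow>h. if j = i then length (filter id \<omega>) else 0)"

definition total_samples :: "hist \<Rightarrow> nat" where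
  "total_samples h = (\<Sum>(j,\<omega>)\<leftarrow>h. length \<omega>)"

text \<open>B 0 = b_1, B 1 = b_2, ...: the next level after n samples (n = 0 or n = b_k)\<close>
definition next_level :: "(nat \<Rightarrow> nat) \<Rightarrow> nat \<Rightarrow> nat" where
  "next_level B n = (if n = 0 then B 0 else B (Suc (THE k. B k = n)))"

definition batch_size :: "(nat \<Rightarrow> nat) \<Rightarrow> hist \<Rightarrow> nat \<Rightarrow> nat" where
  "batch_size B h i = next_level B (arm_n h i) - arm_n h i"

definition W :: "real measure \<Rightarrow> nat \<Rightarrow> nat \<Rightarrow> real" where
  "W \<mu> n R = (\<integral>x. x ^ R * (1 - x) ^ (n - R) \<partial>\<mu>)"

text \<open>posterior predictive probability that the next batch of arm i is exactly \<omega>\<close>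
definition pred :: "real measure \<Rightarrow> hist \<Rightarrow> nat \<Rightarrow> bool list \<Rightarrow> real" where
  "pred \<mu> h i \<omega> =
     W \<mu> (arm_n h i + length \<omega>) (arm_R h i + length (filter id \<omega>)) / W \<mu> (arm_n h i) (arm_R h i)"

definition post :: "real measure \<Rightarrow> hist \<Rightarrow> nat \<Rightarrow> real set \<Rightarrow> real" where
  "post \<mu> h i S =
     (\<integral>x. indicator S x * x ^ arm_R h i * (1 - x) ^ (arm_n h i - arm_R h i) \<partial>\<mu>) / W \<mu> (arm_n h i) (arm_R h i)"

definition decl_prob :: "real measure \<Rightarrow> (nat \<Rightarrow> nat) \<Rightarrow> hist \<Rightarrow> nat \<Rightarrow> bool list set \<Rightarrow> real" where
  "decl_prob \<mu> B h i E = (\<Sum>\<omega>\<in>{\<omega>. length \<omega> = batch_size B h i} \<inter> E. pred \<mu> h i \<omega>)"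

definition N_sample_alg :: "(nat \<Rightarrow> nat) \<Rightarrow> nat \<Rightarrow> (hist \<Rightarrow> act pmf) \<Rightarrow> bool" where
  "N_sample_alg B N alg \<longleftrightarrow>
     (\<forall>h i. Sample i \<in> set_pmf (alg h) \<longrightarrow> total_samples h + batch_size B h i \<le> N)"

text \<open>Probability (true, undistorted, Bayesian) that the output arm has p \<le> \<beta>, starting
from history h, with step budget k.\<close>
fun true_val :: "real measure \<Rightarrow> (nat \<Rightarrow> nat) \<Rightarrow> (hist \<Rightarrow> act pmf) \<Rightarrow> real \<Rightarrow> nat \<Rightarrow> hist \<Rightarrow> real" where
  "true_val \<mu> B alg \<beta> 0 h = 0"
| "true_val \<mu> B alg \<beta> (Suc k) h =
     measure_pmf.expectation (alg h) (\<lambda>a. case a of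
        Output i \<Rightarrow> post \<mu> h i {x. x \<le> \<beta>}
      | Sample i \<Rightarrow> (\<Sum>\<omega>\<in>{\<omega>. length \<omega> = batch_size B h i}.
                        pred \<mu> h i \<omega> * true_val \<mu> B alg \<beta> k (h @ [(i, \<omega>)])))"

text \<open>P^{mu,A}[p_{i*} \<le> \<beta>] for an N-sample algorithm (it halts within N+1 steps).\<close>
definition success_prob :: "real measure \<Rightarrow> (nat \<Rightarrow> nat) \<Rightarrow> nat \<Rightarrow> (hist \<Rightarrow> act pmf) \<Rightarrow> real \<Rightarrow> real" where
  "success_prob \<mu> B N alg \<beta> = true_val \<mu> B alg \<beta> (Suc N) []"

text \<open>Histories reachable (with positive probability) in the distorted process, together with
the cost accumulated so far. advB h i is the event declared on the next batch of arm i.\<close>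
inductive dreach :: "real measure \<Rightarrow> (nat \<Rightarrow> nat) \<Rightarrow> (hist \<Rightarrow> act pmf) \<Rightarrow>
    (hist \<Rightarrow> nat \<Rightarrow> bool list set) \<Rightarrow> hist \<Rightarrow> real \<Rightarrow> bool"
  for \<mu> B alg advB where
  start: "dreach \<mu> B alg advB [] 0"
| step: "dreach \<mu> B alg advB h c \<Longrightarrow> Sample i \<in> set_pmf (alg h) \<Longrightarrow>
         length \<omega> = batch_size B h i \<Longrightarrow> \<omega> \<in> advB h i \<Longrightarrow> pred \<mu> h i \<omega> > 0 \<Longrightarrow>
         dreach \<mu> B alg advB (h @ [(i, \<omega>)]) (c + ln (1 / decl_prob \<mu> B h i (advB h i)))"

text \<open>strength(adversary) \<le> Cost: almost surely all declarations have positive probability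
and the total cost is at most Cost. advF h i is the event declared on p_i when arm i is output.\<close>
definition strength_le :: "real measure \<Rightarrow> (nat \<Rightarrow> nat) \<Rightarrow> (hist \<Rightarrow> act pmf) \<Rightarrow>
    (hist \<Rightarrow> nat \<Rightarrow> bool list set) \<Rightarrow> (hist \<Rightarrow> nat \<Rightarrow> real set) \<Rightarrow> real \<Rightarrow> bool" where
  "strength_le \<mu> B alg advB advF Cost \<longleftrightarrow>
     (\<forall>h c i. dreach \<mu> B alg advB h c \<and> Sample i \<in> set_pmf (alg h) \<longrightarrow>
         decl_prob \<mu> B h i (advB h i) > 0) \<and>
     (\<forall>h c i. dreach \<mu> B alg advB h c \<and> Output i \<in> set_pmf (alg h) \<longrightarrow>
         advF h i \<in> sets borel \<and> post \<mu> h i (advF h i) > 0 \<and>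
         c + ln (1 / post \<mu> h i (advF h i)) \<le> Cost)"

definition ensures_le :: "real measure \<Rightarrow> (nat \<Rightarrow> nat) \<Rightarrow> (hist \<Rightarrow> act pmf) \<Rightarrow>
    (hist \<Rightarrow> nat \<Rightarrow> bool list set) \<Rightarrow> (hist \<Rightarrow> nat \<Rightarrow> real set) \<Rightarrow> real \<Rightarrow> bool" where
  "ensures_le \<mu> B alg advB advF \<beta> \<longleftrightarrow>
     (\<forall>h c i. dreach \<mu> B alg advB h c \<and> Output i \<in> set_pmf (alg h) \<longrightarrow>
         post \<mu> h i (advF h i \<inter> {x. \<beta> < x}) = 0)"

end

theory Submission imports Defs begin

lemma res_AE: assumes "reservoir \<mu>" shows "AE x in \<mu>. 0 \<le> x \<and> x \<le> 1"
proof -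
  interpret prob_space \<mu> using assms by (simp add: reservoir_def)
  have "AE x in \<mu>. x \<in> {0..1}" using assms by (intro AE_prob_1) (simp add: reservoir_def)
  then show ?thesis by auto
qed

lemma res_meas: assumes "reservoir \<mu>" "f \<in> borel_measurable borel" shows "f \<in> borel_measurable \<mu>"
proof -
  have "sets \<mu> = sets borel" using assms by (simp add: reservoir_def)
  then show ?thesis using assms(2) measurable_cong_sets by blast
qed


lemma pw_bounds: fixes x :: real assumes "0 \<le> x \<and> x \<le> 1"
  shows "0 \<le> x ^ a * (1 - x) ^ b \<and> x ^ a * (1 - x) ^ b \<le> 1"
proof -
  have "x ^ a \<le> 1" "(1 - x) ^ b \<le> 1" using assms by (auto intro: power_le_one)
  moreover have "0 \<le> x ^ a" "0 \<le> (1 - x) ^ b" using assms by auto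
  ultimately show ?thesis by (simp add: mult_le_one)
qed

lemma pw_AE: assumes "reservoir \<mu>"
  shows "AE x in \<mu>. 0 \<le> x ^ a * (1 - x) ^ b \<and> x ^ a * (1 - x) ^ b \<le> (1::real)"
  using res_AE[OF assms]
proof (rule eventually_mono)
  fix x :: real assume "0 \<le> x \<and> x \<le> 1"
  then show "0 \<le> x ^ a * (1 - x) ^ b \<and> x ^ a * (1 - x) ^ b \<le> 1" by (rule pw_bounds)
qed

lemma res_int: assumes "reservoir \<mu>" "S \<in> sets borel"
  shows "integrable \<mu> (\<lambda>x. indicator S x * x ^ a * (1 - x) ^ b :: real)"
proof -
  interpret prob_space \<mu> using assms by (simp add: reservoir_def)
  show ?thesis
  proof (rule integrable_const_bound[where B=1])
    show "AE x in \<mu>. norm (indicator S x * x ^ a * (1 - x) ^ b :: real) \<le> 1"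
      using pw_AE[OF assms(1), of a b]
    proof (rule eventually_mono)
      fix x :: real assume x: "0 \<le> x ^ a * (1 - x) ^ b \<and> x ^ a * (1 - x) ^ b \<le> 1"
      show "norm (indicator S x * x ^ a * (1 - x) ^ b :: real) \<le> 1"
      proof (cases "x \<in> S")
        case True then show ?thesis using x by simp
      next
        case False then show ?thesis by simp
      qed
    qed
    have "(\<lambda>x. indicator S x * x ^ a * (1 - x) ^ b :: real) \<in> borel_measurable borel"
      using assms(2) by measurable
    then show "(\<lambda>x. indicator S x * x ^ a * (1 - x) ^ b :: real) \<in> borel_measurable \<mu>"
      by (rule res_meas[OF assms(1)])
  qed
qed

lemma res_int2: assumes "reservoir \<mu>"
  shows "integrable \<mu> (\<lambda>x. x ^ a * (1 - x) ^ b :: real)"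
proof -
  have "integrable \<mu> (\<lambda>x. indicator UNIV x * x ^ a * (1 - x) ^ b :: real)"
    using assms by (rule res_int) simp
  then show ?thesis by simp
qed

lemma ind_bounds: fixes x :: real
  assumes "0 \<le> x ^ a * (1 - x) ^ b \<and> x ^ a * (1 - x) ^ b \<le> 1"
  shows "0 \<le> indicator S x * x ^ a * (1 - x) ^ b \<and> indicator S x * x ^ a * (1 - x) ^ b \<le> x ^ a * (1 - x) ^ b"
proof (cases "x \<in> S")
  case True then show ?thesis using assms by simp
next
  case False then show ?thesis using assms by simp
qed

lemma W_nonneg: assumes "reservoir \<mu>" shows "0 \<le> W \<mu> n R"
  unfolding W_def
  by (rule integral_nonneg_AE) (use pw_AE[OF assms, of R "n - R"] in \<open>rule eventually_mono, blast\<close>)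

lemma pred_nonneg: assumes "reservoir \<mu>" shows "0 \<le> pred \<mu> h i \<omega>"
  unfolding pred_def using W_nonneg[OF assms] by (rule divide_nonneg_nonneg) (rule W_nonneg[OF assms])

lemma post_nonneg: assumes "reservoir \<mu>" shows "0 \<le> post \<mu> h i S"
  unfolding post_def
proof (rule divide_nonneg_nonneg)
  show "0 \<le> W \<mu> (arm_n h i) (arm_R h i)" by (rule W_nonneg[OF assms])
  show "0 \<le> (\<integral>x. indicator S x * x ^ arm_R h i * (1 - x) ^ (arm_n h i - arm_R h i) \<partial>\<mu>)"
    by (rule integral_nonneg_AE)
       (use pw_AE[OF assms, of "arm_R h i" "arm_n h i - arm_R h i"] in \<open>rule eventually_mono, use ind_bounds in blast\<close>)
qed

lemma post_le1: assumes "reservoir \<mu>" shows "post \<mu> h i S \<le> 1"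
proof -
  let ?n = "arm_n h i" and ?R = "arm_R h i"
  have "(\<integral>x. indicator S x * x ^ ?R * (1 - x) ^ (?n - ?R) \<partial>\<mu>) \<le> W \<mu> ?n ?R"
    unfolding W_def
  proof (rule integral_mono_AE'[OF res_int2[OF assms]])
    show "AE x in \<mu>. indicator S x * x ^ ?R * (1 - x) ^ (?n - ?R) \<le> x ^ ?R * (1 - x) ^ (?n - ?R)"
      "AE x in \<mu>. 0 \<le> x ^ ?R * (1 - x) ^ (?n - ?R)"
      using pw_AE[OF assms, of ?R "?n - ?R"] by (rule eventually_mono, use ind_bounds[where S=S] in blast)+
  qed
  then show ?thesis unfolding post_def using W_nonneg[OF assms, of ?n ?R]
    by (cases "W \<mu> ?n ?R = 0") auto
qed


lemma arm_n_snoc: "arm_n (h @ [(j, \<omega>)]) i = arm_n h i + (if j = i then length \<omega> else 0)"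
  by (simp add: arm_n_def)

lemma arm_R_snoc: "arm_R (h @ [(j, \<omega>)]) i = arm_R h i + (if j = i then length (filter id \<omega>) else 0)"
  by (simp add: arm_R_def)

lemma total_samples_snoc: "total_samples (h @ [(j, \<omega>)]) = total_samples h + length \<omega>"
  by (simp add: total_samples_def)

lemma arm_R_le: "arm_R h i \<le> arm_n h i"
proof (induction h rule: rev_induct)
  case Nil then show ?case by (simp add: arm_R_def arm_n_def)
next
  case (snoc p h)
  obtain j \<omega> where p: "p = (j, \<omega>)" by (cases p)
  show ?case unfolding p arm_n_snoc arm_R_snoc using snoc.IH length_filter_le[of id \<omega>]
    by (auto intro: add_mono)
qed

lemma lists_fin: "finite {\<omega> :: bool list. length \<omega> = m}"
  using finite_lists_length_eq[of "UNIV :: bool set" m] by simp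

lemma lists_Suc: "{\<omega> :: bool list. length \<omega> = Suc m} = (\<lambda>(b, \<omega>). b # \<omega>) ` (UNIV \<times> {\<omega>. length \<omega> = m})"
  by (auto simp: length_Suc_conv)

lemma bern_sum0: "(\<Sum>\<omega>\<in>{\<omega> :: bool list. length \<omega> = m}. x ^ length (filter id \<omega>) * (1 - x) ^ length (filter Not \<omega>)) = (1::real)"
proof (induction m)
  case 0 then show ?case by simp
next
  case (Suc m)
  let ?g = "\<lambda>\<omega> :: bool list. x ^ length (filter id \<omega>) * (1 - x) ^ length (filter Not \<omega>)"
  have inj: "inj_on (\<lambda>(b, \<omega>). b # \<omega>) (UNIV \<times> {\<omega> :: bool list. length \<omega> = m})"
    by (auto simp: inj_on_def)
  have "(\<Sum>\<omega>\<in>{\<omega> :: bool list. length \<omega> = Suc m}. ?g \<omega>) = (\<Sum>p\<in>UNIV \<times> {\<omega> :: bool list. length \<omega> = m}. ?g (fst p # snd p))"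
    unfolding lists_Suc by (subst sum.reindex[OF inj]) (simp add: case_prod_beta)
  also have "\<dots> = (\<Sum>b\<in>UNIV. \<Sum>\<omega>\<in>{\<omega> :: bool list. length \<omega> = m}. ?g (b # \<omega>))"
    by (subst sum.cartesian_product) (simp add: case_prod_beta)
  also have "\<dots> = (\<Sum>\<omega>\<in>{\<omega> :: bool list. length \<omega> = m}. ?g (True # \<omega>)) + (\<Sum>\<omega>\<in>{\<omega> :: bool list. length \<omega> = m}. ?g (False # \<omega>))"
    by (simp add: UNIV_bool)
  also have "\<dots> = x * (\<Sum>\<omega>\<in>{\<omega> :: bool list. length \<omega> = m}. ?g \<omega>) + (1 - x) * (\<Sum>\<omega>\<in>{\<omega> :: bool list. length \<omega> = m}. ?g \<omega>)"
    by (simp add: sum_distrib_left mult_ac)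
  also have "\<dots> = x * 1 + (1 - x) * 1" by (simp only: Suc.IH)
  also have "\<dots> = 1" by simp
  finally show ?case .
qed

lemma bern_sum: "(\<Sum>\<omega>\<in>{\<omega> :: bool list. length \<omega> = m}. x ^ length (filter id \<omega>) * (1 - x) ^ (m - length (filter id \<omega>))) = (1::real)"
proof -
  have "(\<Sum>\<omega>\<in>{\<omega> :: bool list. length \<omega> = m}. x ^ length (filter id \<omega>) * (1 - x) ^ (m - length (filter id \<omega>)))
     = (\<Sum>\<omega>\<in>{\<omega> :: bool list. length \<omega> = m}. x ^ length (filter id \<omega>) * (1 - x) ^ length (filter Not \<omega>))"
  proof (rule sum.cong)
    fix \<omega> :: "bool list" assume "\<omega> \<in> {\<omega>. length \<omega> = m}"
    then have "m - length (filter id \<omega>) = length (filter Not \<omega>)"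
      using sum_length_filter_compl[of id \<omega>] by (simp add: comp_def)
    then show "x ^ length (filter id \<omega>) * (1 - x) ^ (m - length (filter id \<omega>)) = x ^ length (filter id \<omega>) * (1 - x) ^ length (filter Not \<omega>)"
      by simp
  qed simp
  then show ?thesis using bern_sum0 by simp
qed

lemma pred_sum: assumes "reservoir \<mu>"
  shows "(\<Sum>\<omega>\<in>{\<omega>. length \<omega> = m}. pred \<mu> h i \<omega>) \<le> 1"
proof -
  let ?n = "arm_n h i" and ?R = "arm_R h i"
  let ?S = "{\<omega> :: bool list. length \<omega> = m}"
  have RN: "?R \<le> ?n" by (rule arm_R_le)
  show ?thesis
  proof (cases "W \<mu> ?n ?R = 0")
    case True then show ?thesis by (simp add: pred_def)
  next
    case False
    have eq: "W \<mu> (?n + length \<omega>) (?R + length (filter id \<omega>))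
       = (\<integral>x. x ^ ?R * (1 - x) ^ (?n - ?R) * (x ^ length (filter id \<omega>) * (1 - x) ^ (m - length (filter id \<omega>))) \<partial>\<mu>)"
      if "\<omega> \<in> ?S" for \<omega>
    proof -
      have "length (filter id \<omega>) \<le> m" using that length_filter_le[of id \<omega>] by simp
      then have e: "(?n + length \<omega>) - (?R + length (filter id \<omega>)) = (?n - ?R) + (m - length (filter id \<omega>))"
        using RN that by simp
      show ?thesis unfolding W_def e by (simp add: power_add mult_ac)
    qed
    have "(\<Sum>\<omega>\<in>?S. W \<mu> (?n + length \<omega>) (?R + length (filter id \<omega>)))
        = (\<Sum>\<omega>\<in>?S. (\<integral>x. x ^ ?R * (1 - x) ^ (?n - ?R) * (x ^ length (filter id \<omega>) * (1 - x) ^ (m - length (filter id \<omega>))) \<partial>\<mu>))"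
      using eq by (rule sum.cong[OF refl])
    also have "\<dots> = (\<integral>x. (\<Sum>\<omega>\<in>?S. x ^ ?R * (1 - x) ^ (?n - ?R) * (x ^ length (filter id \<omega>) * (1 - x) ^ (m - length (filter id \<omega>)))) \<partial>\<mu>)"
    proof -
      have int: "integrable \<mu> (\<lambda>x. x ^ ?R * (1 - x) ^ (?n - ?R) * (x ^ length (filter id \<omega>) * (1 - x) ^ (m - length (filter id \<omega>))))"
        if "\<omega> \<in> ?S" for \<omega>
      proof -
        have "integrable \<mu> (\<lambda>x. x ^ (?R + length (filter id \<omega>)) * (1 - x) ^ ((?n - ?R) + (m - length (filter id \<omega>))) :: real)"
          by (rule res_int2[OF assms])
        then show ?thesis by (simp add: power_add mult_ac)
      qed
      show ?thesis
        by (rule Bochner_Integration.integral_sum[where f="\<lambda>\<omega> x. x ^ ?R * (1 - x) ^ (?n - ?R) * (x ^ length (filter id \<omega>) * (1 - x) ^ (m - length (filter id \<omega>)))", OF int, symmetric])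
    qed
    also have "\<dots> = W \<mu> ?n ?R"
      unfolding W_def by (simp add: sum_distrib_left[symmetric] bern_sum)
    finally have "(\<Sum>\<omega>\<in>?S. W \<mu> (?n + length \<omega>) (?R + length (filter id \<omega>))) = W \<mu> ?n ?R" .
    then have "(\<Sum>\<omega>\<in>?S. pred \<mu> h i \<omega>) = 1"
      unfolding pred_def using False by (simp add: sum_divide_distrib[symmetric])
    then show ?thesis by simp
  qed
qed


definition Fv :: "real measure \<Rightarrow> (nat \<Rightarrow> nat) \<Rightarrow> (hist \<Rightarrow> act pmf) \<Rightarrow> real \<Rightarrow> nat \<Rightarrow> hist \<Rightarrow> act \<Rightarrow> real" where
  "Fv \<mu> B alg \<beta> k h a = (case a of
        Output i \<Rightarrow> post \<mu> h i {x. x \<le> \<beta>}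
      | Sample i \<Rightarrow> (\<Sum>\<omega>\<in>{\<omega>. length \<omega> = batch_size B h i}.
                        pred \<mu> h i \<omega> * true_val \<mu> B alg \<beta> k (h @ [(i, \<omega>)])))"

lemma tv_Suc: "true_val \<mu> B alg \<beta> (Suc k) h = measure_pmf.expectation (alg h) (Fv \<mu> B alg \<beta> k h)"
  by (simp add: Fv_def[abs_def])

lemma tv_bounds: assumes "reservoir \<mu>"
  shows "0 \<le> true_val \<mu> B alg \<beta> k h \<and> true_val \<mu> B alg \<beta> k h \<le> 1"
proof (induction k arbitrary: h)
  case 0 then show ?case by simp
next
  case (Suc k)
  have Fb: "0 \<le> Fv \<mu> B alg \<beta> k h a \<and> Fv \<mu> B alg \<beta> k h a \<le> 1" for a
  proof (cases a)
    case (Output i) then show ?thesis using post_nonneg[OF assms] post_le1[OF assms] by (simp add: Fv_def)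
  next
    case (Sample i)
    let ?L = "{\<omega> :: bool list. length \<omega> = batch_size B h i}"
    have "0 \<le> (\<Sum>\<omega>\<in>?L. pred \<mu> h i \<omega> * true_val \<mu> B alg \<beta> k (h @ [(i, \<omega>)]))"
      using pred_nonneg[OF assms] Suc.IH by (intro sum_nonneg mult_nonneg_nonneg) auto
    moreover have "(\<Sum>\<omega>\<in>?L. pred \<mu> h i \<omega> * true_val \<mu> B alg \<beta> k (h @ [(i, \<omega>)])) \<le> (\<Sum>\<omega>\<in>?L. pred \<mu> h i \<omega>)"
      using pred_nonneg[OF assms] Suc.IH by (intro sum_mono mult_left_le) auto
    moreover have "(\<Sum>\<omega>\<in>?L. pred \<mu> h i \<omega>) \<le> 1" by (rule pred_sum[OF assms])
    ultimately show ?thesis using Sample by (simp add: Fv_def)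
  qed
  have int: "integrable (measure_pmf (alg h)) (Fv \<mu> B alg \<beta> k h)"
    by (rule measure_pmf.integrable_const_bound[where B=1]) (use Fb in auto)
  show ?case unfolding tv_Suc
  proof
    show "0 \<le> measure_pmf.expectation (alg h) (Fv \<mu> B alg \<beta> k h)"
      using Fb by (intro integral_nonneg_AE) auto
    show "measure_pmf.expectation (alg h) (Fv \<mu> B alg \<beta> k h) \<le> 1"
      using Fb by (intro measure_pmf.integral_le_const int) auto
  qed
qed

lemma next_level_gt: assumes "batch_seq B" "n = 0 \<or> (\<exists>k. B k = n)"
  shows "n < next_level B n \<and> (\<exists>k. B k = next_level B n)"
proof (cases "n = 0")
  case True then show ?thesis using assms by (auto simp: next_level_def batch_seq_def)
next
  case False
  then obtain k where k: "B k = n" using assms by auto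
  have sm: "strict_mono B" using assms by (simp add: batch_seq_def)
  have "(THE k'. B k' = n) = k"
  proof (rule the_equality)
    show "B k = n" by (rule k)
    fix k' assume "B k' = n" then show "k' = k" using k strict_mono_eq[OF sm] by metis
  qed
  then have "next_level B n = B (Suc k)" using False by (simp add: next_level_def)
  moreover have "B k < B (Suc k)" using sm by (simp add: strict_mono_def)
  ultimately show ?thesis using k by auto
qed

lemma reach_level: assumes "batch_seq B" "dreach \<mu> B alg advB h c"
  shows "arm_n h i = 0 \<or> (\<exists>k. B k = arm_n h i)"
  using assms(2)
proof (induction rule: dreach.induct)
  case start then show ?case by (simp add: arm_n_def)
next
  case (step h c j \<omega>)
  show ?case
  proof (cases "j = i")
    case True
    have "length \<omega> = next_level B (arm_n h i) - arm_n h i" using step True by (simp add: batch_size_def)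
    moreover have "arm_n h i < next_level B (arm_n h i) \<and> (\<exists>k. B k = next_level B (arm_n h i))"
      by (rule next_level_gt[OF assms(1) step.IH])
    ultimately show ?thesis using True by (simp add: arm_n_snoc)
  next
    case False then show ?thesis using step.IH by (simp add: arm_n_snoc)
  qed
qed

lemma bs_pos: assumes "batch_seq B" "dreach \<mu> B alg advB h c"
  shows "0 < batch_size B h i"
  using next_level_gt[OF assms(1) reach_level[OF assms]] by (simp add: batch_size_def)


lemma post_split: assumes "reservoir \<mu>" "A \<in> sets borel" "post \<mu> h i (A \<inter> {x. \<beta> < x}) = 0"
  shows "post \<mu> h i A \<le> post \<mu> h i {x. x \<le> \<beta>}"
proof -
  let ?n = "arm_n h i" and ?R = "arm_R h i"
  let ?p = "\<lambda>x::real. x ^ ?R * (1 - x) ^ (?n - ?R)"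
  let ?W = "W \<mu> ?n ?R"
  have b1: "{x::real. x \<le> \<beta>} \<in> sets borel"
  proof -
    have "{x::real. x \<le> \<beta>} = {..\<beta>}" by auto
    then show ?thesis by simp
  qed
  have b2: "A \<inter> {x::real. \<beta> < x} \<in> sets borel"
  proof -
    have "{x::real. \<beta> < x} = {\<beta><..}" by auto
    then show ?thesis using assms(2) by simp
  qed
  have i1: "integrable \<mu> (\<lambda>x. indicator {x. x \<le> \<beta>} x * x ^ ?R * (1 - x) ^ (?n - ?R) :: real)"
    by (rule res_int[OF assms(1) b1])
  have i2: "integrable \<mu> (\<lambda>x. indicator (A \<inter> {x. \<beta> < x}) x * x ^ ?R * (1 - x) ^ (?n - ?R) :: real)"
    by (rule res_int[OF assms(1) b2])
  have le: "(\<integral>x. indicator A x * x ^ ?R * (1 - x) ^ (?n - ?R) \<partial>\<mu>)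
     \<le> (\<integral>x. indicator {x. x \<le> \<beta>} x * x ^ ?R * (1 - x) ^ (?n - ?R) + indicator (A \<inter> {x. \<beta> < x}) x * x ^ ?R * (1 - x) ^ (?n - ?R) \<partial>\<mu>)"
  proof (rule integral_mono_AE')
    show "integrable \<mu> (\<lambda>x. indicator {x. x \<le> \<beta>} x * x ^ ?R * (1 - x) ^ (?n - ?R) + indicator (A \<inter> {x. \<beta> < x}) x * x ^ ?R * (1 - x) ^ (?n - ?R) :: real)"
      using i1 i2 by (rule Bochner_Integration.integrable_add)
    show "AE x in \<mu>. indicator A x * x ^ ?R * (1 - x) ^ (?n - ?R) \<le> indicator {x. x \<le> \<beta>} x * x ^ ?R * (1 - x) ^ (?n - ?R) + indicator (A \<inter> {x. \<beta> < x}) x * x ^ ?R * (1 - x) ^ (?n - ?R)"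
      using pw_AE[OF assms(1), of ?R "?n - ?R"]
    proof (rule eventually_mono)
      fix x :: real assume x: "0 \<le> x ^ ?R * (1 - x) ^ (?n - ?R) \<and> x ^ ?R * (1 - x) ^ (?n - ?R) \<le> 1"
      show "indicator A x * x ^ ?R * (1 - x) ^ (?n - ?R) \<le> indicator {x. x \<le> \<beta>} x * x ^ ?R * (1 - x) ^ (?n - ?R) + indicator (A \<inter> {x. \<beta> < x}) x * x ^ ?R * (1 - x) ^ (?n - ?R)"
        using x by (cases "x \<in> A"; cases "x \<le> \<beta>") (auto simp: indicator_def mult.assoc)
    qed
    show "AE x in \<mu>. 0 \<le> indicator {x. x \<le> \<beta>} x * x ^ ?R * (1 - x) ^ (?n - ?R) + indicator (A \<inter> {x. \<beta> < x}) x * x ^ ?R * (1 - x) ^ (?n - ?R)"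
      using pw_AE[OF assms(1), of ?R "?n - ?R"]
    proof (rule eventually_mono)
      fix x :: real assume x: "0 \<le> x ^ ?R * (1 - x) ^ (?n - ?R) \<and> x ^ ?R * (1 - x) ^ (?n - ?R) \<le> 1"
      show "0 \<le> indicator {x. x \<le> \<beta>} x * x ^ ?R * (1 - x) ^ (?n - ?R) + indicator (A \<inter> {x. \<beta> < x}) x * x ^ ?R * (1 - x) ^ (?n - ?R)"
        using x by (cases "x \<in> A"; cases "x \<le> \<beta>") (auto simp: indicator_def mult.assoc)
    qed
  qed
  also have "\<dots> = (\<integral>x. indicator {x. x \<le> \<beta>} x * x ^ ?R * (1 - x) ^ (?n - ?R) \<partial>\<mu>) + (\<integral>x. indicator (A \<inter> {x. \<beta> < x}) x * x ^ ?R * (1 - x) ^ (?n - ?R) \<partial>\<mu>)"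
    using i1 i2 by (rule Bochner_Integration.integral_add)
  finally have le2: "(\<integral>x. indicator A x * x ^ ?R * (1 - x) ^ (?n - ?R) \<partial>\<mu>)
     \<le> (\<integral>x. indicator {x. x \<le> \<beta>} x * x ^ ?R * (1 - x) ^ (?n - ?R) \<partial>\<mu>) + (\<integral>x. indicator (A \<inter> {x. \<beta> < x}) x * x ^ ?R * (1 - x) ^ (?n - ?R) \<partial>\<mu>)" .
  show ?thesis
  proof (cases "?W = 0")
    case True then show ?thesis by (simp add: post_def)
  next
    case False
    then have Wp: "0 < ?W" using W_nonneg[OF assms(1), of ?n ?R] by simp
    have "(\<integral>x. indicator (A \<inter> {x. \<beta> < x}) x * x ^ ?R * (1 - x) ^ (?n - ?R) \<partial>\<mu>) = 0"
      using assms(3) False by (simp add: post_def)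
    then show ?thesis using le2 Wp unfolding post_def by (simp add: divide_right_mono)
  qed
qed


lemma Fv_bounds: assumes "reservoir \<mu>"
  shows "0 \<le> Fv \<mu> B alg \<beta> k h a \<and> Fv \<mu> B alg \<beta> k h a \<le> 1"
proof (cases a)
  case (Output i) then show ?thesis using post_nonneg[OF assms] post_le1[OF assms] by (simp add: Fv_def)
next
  case (Sample i)
  let ?L = "{\<omega> :: bool list. length \<omega> = batch_size B h i}"
  have "0 \<le> (\<Sum>\<omega>\<in>?L. pred \<mu> h i \<omega> * true_val \<mu> B alg \<beta> k (h @ [(i, \<omega>)]))"
    using pred_nonneg[OF assms] tv_bounds[OF assms] by (intro sum_nonneg mult_nonneg_nonneg) auto
  moreover have "(\<Sum>\<omega>\<in>?L. pred \<mu> h i \<omega> * true_val \<mu> B alg \<beta> k (h @ [(i, \<omega>)])) \<le> (\<Sum>\<omega>\<in>?L. pred \<mu> h i \<omega>)"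
    using pred_nonneg[OF assms] tv_bounds[OF assms] by (intro sum_mono mult_left_le) auto
  moreover have "(\<Sum>\<omega>\<in>?L. pred \<mu> h i \<omega>) \<le> 1" by (rule pred_sum[OF assms])
  ultimately show ?thesis using Sample by (simp add: Fv_def)
qed

lemma main_ind:
  assumes res: "reservoir \<mu>"
    and bs: "batch_seq B"
    and ns: "N_sample_alg B N alg"
    and st: "strength_le \<mu> B alg advB advF Cost"
    and en: "ensures_le \<mu> B alg advB advF \<beta>"
  shows "dreach \<mu> B alg advB h c \<Longrightarrow> N - total_samples h \<le> k \<Longrightarrow> exp (c - Cost) \<le> true_val \<mu> B alg \<beta> (Suc k) h"
proof (induction k arbitrary: h c rule: less_induct)
  case (less k)
  have Fb: "exp (c - Cost) \<le> Fv \<mu> B alg \<beta> k h a" if a: "a \<in> set_pmf (alg h)" for a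
  proof (cases a)
    case (Output i)
    have oi: "Output i \<in> set_pmf (alg h)" using a Output by simp
    have A: "advF h i \<in> sets borel" and P: "post \<mu> h i (advF h i) > 0"
      and C: "c + ln (1 / post \<mu> h i (advF h i)) \<le> Cost"
      using st less.prems(1) oi unfolding strength_le_def by blast+
    have z: "post \<mu> h i (advF h i \<inter> {x. \<beta> < x}) = 0"
      using en less.prems(1) oi unfolding ensures_le_def by blast
    have "exp (c - Cost) \<le> post \<mu> h i (advF h i)"
    proof -
      have "ln (1 / post \<mu> h i (advF h i)) = - ln (post \<mu> h i (advF h i))"
        using P by (simp add: ln_div)
      then have "c - Cost \<le> ln (post \<mu> h i (advF h i))" using C by simp
      then have "exp (c - Cost) \<le> exp (ln (post \<mu> h i (advF h i)))" by simp
      then show ?thesis using P by simp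
    qed
    also have "\<dots> \<le> post \<mu> h i {x. x \<le> \<beta>}" by (rule post_split[OF res A z])
    finally show ?thesis using Output by (simp add: Fv_def)
  next
    case (Sample i)
    have si: "Sample i \<in> set_pmf (alg h)" using a Sample by simp
    let ?b = "batch_size B h i"
    let ?L = "{\<omega> :: bool list. length \<omega> = ?b}"
    let ?E = "advB h i"
    let ?D = "decl_prob \<mu> B h i ?E"
    let ?e = "exp (c - Cost)"
    have D: "0 < ?D" using st less.prems(1) si unfolding strength_le_def by blast
    have tsb: "total_samples h + ?b \<le> N" using ns si unfolding N_sample_alg_def by blast
    have bpos: "0 < ?b" by (rule bs_pos[OF bs less.prems(1)])
    have k0: "0 < k" using tsb bpos less.prems(2) by linarith
    define k' where "k' = k - 1"
    have kk: "k = Suc k'" using k0 by (simp add: k'_def)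
    have trm: "pred \<mu> h i \<omega> * (?e / ?D) \<le> pred \<mu> h i \<omega> * true_val \<mu> B alg \<beta> k (h @ [(i, \<omega>)])"
      if w: "\<omega> \<in> ?L \<inter> ?E" for \<omega>
    proof (cases "pred \<mu> h i \<omega> = 0")
      case True then show ?thesis by simp
    next
      case False
      then have pp: "0 < pred \<mu> h i \<omega>" using pred_nonneg[OF res, of h i \<omega>] by simp
      have dr: "dreach \<mu> B alg advB (h @ [(i, \<omega>)]) (c + ln (1 / ?D))"
        using less.prems(1) si w pp by (intro dreach.step) auto
      have "N - total_samples (h @ [(i, \<omega>)]) \<le> k'"
        using w less.prems(2) kk tsb bpos by (simp add: total_samples_snoc)
      then have "exp (c + ln (1 / ?D) - Cost) \<le> true_val \<mu> B alg \<beta> (Suc k') (h @ [(i, \<omega>)])"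
        using less.IH[of k' "h @ [(i, \<omega>)]" "c + ln (1 / ?D)"] dr kk by simp
      moreover have "exp (c + ln (1 / ?D) - Cost) = ?e / ?D"
      proof -
        have "c + ln (1 / ?D) - Cost = (c - Cost) + ln (1 / ?D)" by simp
        then have "exp (c + ln (1 / ?D) - Cost) = ?e * exp (ln (1 / ?D))" by (simp only: exp_add)
        also have "\<dots> = ?e * (1 / ?D)" using D by simp
        finally show ?thesis by simp
      qed
      ultimately show ?thesis using pp kk by (intro mult_left_mono) auto
    qed
    have "?e = (\<Sum>\<omega>\<in>?L \<inter> ?E. pred \<mu> h i \<omega>) * (?e / ?D)"
      using D by (simp add: decl_prob_def)
    also have "\<dots> = (\<Sum>\<omega>\<in>?L \<inter> ?E. pred \<mu> h i \<omega> * (?e / ?D))"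
      by (rule sum_distrib_right)
    also have "\<dots> \<le> (\<Sum>\<omega>\<in>?L \<inter> ?E. pred \<mu> h i \<omega> * true_val \<mu> B alg \<beta> k (h @ [(i, \<omega>)]))"
      using trm by (rule sum_mono)
    also have "\<dots> \<le> (\<Sum>\<omega>\<in>?L. pred \<mu> h i \<omega> * true_val \<mu> B alg \<beta> k (h @ [(i, \<omega>)]))"
      using lists_fin pred_nonneg[OF res] tv_bounds[OF res]
      by (intro sum_mono2) (auto intro: mult_nonneg_nonneg)
    finally show ?thesis using Sample by (simp add: Fv_def)
  qed
  have Fb01: "0 \<le> Fv \<mu> B alg \<beta> k h a \<and> Fv \<mu> B alg \<beta> k h a \<le> 1" for a
    by (rule Fv_bounds[OF res])
  have int: "integrable (measure_pmf (alg h)) (Fv \<mu> B alg \<beta> k h)"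
    by (rule measure_pmf.integrable_const_bound[where B=1]) (use Fb01 in auto)
  show ?case unfolding tv_Suc
    by (rule measure_pmf.integral_ge_const[OF int]) (use Fb in \<open>simp add: AE_measure_pmf_iff\<close>)
qed

theorem lemma3p5:
  fixes \<mu> :: "real measure" and \<beta> Cost :: real and B :: "nat \<Rightarrow> nat" and N :: nat
    and alg :: "hist \<Rightarrow> act pmf"
    and advB :: "hist \<Rightarrow> nat \<Rightarrow> bool list set" and advF :: "hist \<Rightarrow> nat \<Rightarrow> real set"
  assumes "reservoir \<mu>"
    and "0 \<le> \<beta>" and "\<beta> \<le> 1"
    and "batch_seq B"
    and "N_sample_alg B N alg"
    and "strength_le \<mu> B alg advB advF Cost"
    and "ensures_le \<mu> B alg advB advF \<beta>"
  shows "success_prob \<mu> B N alg \<beta> \<ge> exp (- Cost)"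
proof -
  have "exp (0 - Cost) \<le> true_val \<mu> B alg \<beta> (Suc N) []"
    by (rule main_ind[OF assms(1,4,5,6,7)]) (auto intro: dreach.start)
  then show ?thesis by (simp add: success_prob_def)
qed

end
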